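(* Let $0<q<1$, $\sigma\in\mathbb{R}\setminus\{0\}$ and $\gamma>-1$, and let $J=J(\sigma,\gamma)$ be the Jacobi matrix operator in $\ell^2(\mathbb{N})$ with diagonal entries $\lambda_n=q^{n-1}$ and off-diagonal entries \[ w_n=\tfrac12\sinh(\sigma)\,q^{(n-\gamma-1)/2}\sqrt{1-q^{n+\gamma}},\quad n\in\mathbb{N}, \] i.e. $(Jx)_1=\lambda_1x_1+w_1x_2$, $(Jx)_n=w_{n-1}x_{n-1}+\lambda_nx_n+w_nx_{n+1}$ for $n\ge2$. Then $z\neq0$ is an eigenvalue of $J$ if and only if \[ \big(\cosh^2(\sigma/2)z^{-1};q\big)_\infty\,{}_1\phi_1\!\big(q^{-\gamma}\cosh^2(\sigma/2)z^{-1};\cosh^2(\sigma/2)z^{-1};q,-\sinh^2(\sigma/2)z^{-1}\big)=0. \] Moreover, if $z\neq0$ solves this equation then the sequence $\{v_n\}_{n=1}^\infty$, \[ v_n=q^{-\frac12\gamma n+\frac14n(n-3)}\frac{\sinh^n(\sigma)(2z)^{-n}}{\sqrt{(q^{\gamma+n};q)_\infty}}\big(q^n\cosh^2(\tfrac{\sigma}{2})z^{-1};q\big)_\infty\,{}_1\phi_1\!\Big(q^{-\gamma}\cosh^2(\tfrac{\sigma}{2})z^{-1};q^n\cosh^2(\tfrac{\sigma}{2})z^{-1};q,-q^n\sinh^2(\tfrac{\sigma}{2})z^{-1}\Big), \] is a corresponding eigenvector.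
   Context: $(a;q)_k=\prod_{j=0}^{k-1}(1-aq^j)$, $(a;q)_\infty=\lim_k(a;q)_k$, complex powers $q^s=e^{s\log q}$, and ${}_1\phi_1(a;b;q,z)=\sum_{k\ge0}(-1)^kq^{k(k-1)/2}\frac{(a;q)_k}{(b;q)_k(q;q)_k}z^k$. The matrix defines a bounded (compact) self-adjoint operator. *)

theory Defs
  imports "HOL-Analysis.Analysis"
begin

definition qpoch :: "complex \<Rightarrow> real \<Rightarrow> nat \<Rightarrow> complex" where
  "qpoch a q k = (\<Prod>j<k. 1 - a * complex_of_real q ^ j)"

definition qpoch_inf :: "complex \<Rightarrow> real \<Rightarrow> complex" where
  "qpoch_inf a q = lim (\<lambda>k. qpoch a q k)"

definition phi11 :: "complex \<Rightarrow> complex \<Rightarrow> real \<Rightarrow> complex \<Rightarrow> complex" where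
  "phi11 a b q z = (\<Sum>k. (-1) ^ k * complex_of_real q ^ (k * (k - 1) div 2)
        * qpoch a q k / (qpoch b q k * qpoch (complex_of_real q) q k) * z ^ k)"

text \<open>The product (b;q)_\<infinity> * 1phi1(a;b;q,z), written termwise using
  (b;q)_\<infinity> / (b;q)_k = (b q^k;q)_\<infinity>; this is the entire function of b that the
  product denotes (it agrees with qpoch_inf b q * phi11 a b q z whenever (b;q)_k \<noteq> 0 for all k).\<close>
definition qpoch_phi11 :: "complex \<Rightarrow> complex \<Rightarrow> real \<Rightarrow> complex \<Rightarrow> complex" where
  "qpoch_phi11 a b q z = (\<Sum>k. (-1) ^ k * complex_of_real q ^ (k * (k - 1) div 2)
        * qpoch a q k * qpoch_inf (b * complex_of_real q ^ k) q
        / qpoch (complex_of_real q) q k * z ^ k)"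

definition jac_diag :: "real \<Rightarrow> nat \<Rightarrow> real" where
  "jac_diag q n = q ^ (n - 1)"

definition jac_off :: "real \<Rightarrow> real \<Rightarrow> real \<Rightarrow> nat \<Rightarrow> real" where
  "jac_off q \<sigma> \<gamma> n = 1/2 * sinh \<sigma> * q powr ((real n - \<gamma> - 1) / 2) * sqrt (1 - q powr (real n + \<gamma>))"

text \<open>Action of J on a sequence x (components x 1, x 2, ...; x 0 unused).\<close>
definition jac_apply :: "real \<Rightarrow> real \<Rightarrow> real \<Rightarrow> (nat \<Rightarrow> complex) \<Rightarrow> nat \<Rightarrow> complex" where
  "jac_apply q \<sigma> \<gamma> x n =
     (if n = 1 then complex_of_real (jac_diag q 1) * x 1 + complex_of_real (jac_off q \<sigma> \<gamma> 1) * x 2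
      else complex_of_real (jac_off q \<sigma> \<gamma> (n - 1)) * x (n - 1) + complex_of_real (jac_diag q n) * x n
           + complex_of_real (jac_off q \<sigma> \<gamma> n) * x (n + 1))"

definition in_l2 :: "(nat \<Rightarrow> complex) \<Rightarrow> bool" where
  "in_l2 x \<longleftrightarrow> summable (\<lambda>n. (cmod (x (Suc n)))\<^sup>2)"

definition is_eigenvector :: "real \<Rightarrow> real \<Rightarrow> real \<Rightarrow> complex \<Rightarrow> (nat \<Rightarrow> complex) \<Rightarrow> bool" where
  "is_eigenvector q \<sigma> \<gamma> z x \<longleftrightarrow>
     in_l2 x \<and> (\<exists>n\<ge>1. x n \<noteq> 0) \<and> (\<forall>n\<ge>1. jac_apply q \<sigma> \<gamma> x n = z * x n)"

definition is_eigenvalue :: "real \<Rightarrow> real \<Rightarrow> real \<Rightarrow> complex \<Rightarrow> bool" where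
  "is_eigenvalue q \<sigma> \<gamma> z \<longleftrightarrow> (\<exists>x. is_eigenvector q \<sigma> \<gamma> z x)"

definition eigvec :: "real \<Rightarrow> real \<Rightarrow> real \<Rightarrow> complex \<Rightarrow> nat \<Rightarrow> complex" where
  "eigvec q \<sigma> \<gamma> z n =
     complex_of_real (q powr (- \<gamma> * real n / 2 + real n * (real n - 3) / 4))
     * complex_of_real (sinh \<sigma> ^ n) * inverse (2 * z) ^ n
     / complex_of_real (sqrt (Re (qpoch_inf (complex_of_real (q powr (\<gamma> + real n))) q)))
     * qpoch_phi11 (complex_of_real (q powr (- \<gamma>) * (cosh (\<sigma>/2))\<^sup>2) / z)
                   (complex_of_real (q ^ n * (cosh (\<sigma>/2))\<^sup>2) / z) q
                   (- complex_of_real (q ^ n * (sinh (\<sigma>/2))\<^sup>2) / z)"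

end

theory Submission
  imports Defs
begin

lemma qpoch_Suc: "qpoch y q (Suc k) = (1 - y) * qpoch (y * complex_of_real q) q k"
  unfolding qpoch_def by (subst prod.lessThan_Suc_shift) (simp add: mult_ac)

lemma qpoch_Suc': "qpoch y q (Suc k) = qpoch y q k * (1 - y * complex_of_real q ^ k)"
  unfolding qpoch_def by simp

lemma qpoch_LIMSEQ:
  assumes "0 < q" "q < 1"
  shows "(\<lambda>k. qpoch y q k) \<longlonglongrightarrow> qpoch_inf y q"
proof -
  let ?f = "\<lambda>j. 1 - y * complex_of_real q ^ j"
  have "summable (\<lambda>j. norm y * q ^ j)"
    using assms by (intro summable_mult summable_geometric) auto
  moreover have "norm (?f j - 1) = norm y * q ^ j" for j
    using assms by (simp add: norm_mult norm_power)
  ultimately have "summable (\<lambda>j. norm (?f j - 1))" by simp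
  then have "abs_convergent_prod ?f" by (rule summable_imp_abs_convergent_prod)
  then have "convergent_prod ?f" by (rule abs_convergent_prod_imp_convergent_prod)
  then have "(\<lambda>n. \<Prod>i\<le>n. ?f i) \<longlonglongrightarrow> prodinf ?f" by (rule convergent_prod_LIMSEQ)
  then have L: "(\<lambda>n. \<Prod>i<n. ?f i) \<longlonglongrightarrow> prodinf ?f" by (simp add: LIMSEQ_lessThan_iff_atMost)
  then have "convergent (\<lambda>k. qpoch y q k)" unfolding qpoch_def convergent_def by blast
  then show ?thesis unfolding qpoch_inf_def by (simp add: convergent_LIMSEQ_iff)
qed

lemma qpoch_inf_rec:
  assumes "0 < q" "q < 1"
  shows "qpoch_inf y q = (1 - y) * qpoch_inf (y * complex_of_real q) q"
proof -
  have "(\<lambda>k. qpoch y q (Suc k)) \<longlonglongrightarrow> qpoch_inf y q"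
    using qpoch_LIMSEQ[OF assms] by (rule LIMSEQ_Suc)
  moreover have "(\<lambda>k. qpoch y q (Suc k)) \<longlonglongrightarrow> (1 - y) * qpoch_inf (y * complex_of_real q) q"
    unfolding qpoch_Suc by (intro tendsto_mult_left qpoch_LIMSEQ assms)
  ultimately show ?thesis by (rule LIMSEQ_unique)
qed

lemma geom_sum_le:
  fixes q :: real
  assumes "0 < q" "q < 1"
  shows "(\<Sum>j<k. q ^ j) \<le> 1 / (1 - q)"
proof -
  have "(\<Sum>j<k. q ^ j) = (1 - q ^ k) / (1 - q)" using assms sum_gp_strict[of q k] by auto
  also have "\<dots> \<le> 1 / (1 - q)" using assms by (intro divide_right_mono) auto
  finally show ?thesis .
qed

lemma prod_exp_bound:
  fixes q r :: real
  assumes "0 < q" "q < 1" "r \<ge> 0"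
  shows "(\<Prod>j<k. 1 + r * q ^ j) \<le> exp (r / (1 - q))"
proof -
  have "(\<Prod>j<k. 1 + r * q ^ j) \<le> (\<Prod>j<k. exp (r * q ^ j))"
  proof (rule prod_mono, rule conjI)
    fix j show "0 \<le> 1 + r * q ^ j" using assms by simp
    show "1 + r * q ^ j \<le> exp (r * q ^ j)" by (rule exp_ge_add_one_self)
  qed
  also have "\<dots> = exp (r * (\<Sum>j<k. q ^ j))" by (simp add: exp_sum sum_distrib_left)
  also have "\<dots> \<le> exp (r * (1 / (1 - q)))" using assms geom_sum_le by (intro mult_left_mono exp_mono) auto
  finally show ?thesis by simp
qed

lemma qpoch_norm_le:
  assumes "0 < q" "q < 1"
  shows "norm (qpoch y q k) \<le> exp (norm y / (1 - q))"
proof -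
  have "norm (qpoch y q k) \<le> (\<Prod>j<k. norm (1 - y * complex_of_real q ^ j))"
    unfolding qpoch_def by (simp add: prod_norm)
  also have "\<dots> \<le> (\<Prod>j<k. 1 + norm y * q ^ j)"
  proof (intro prod_mono conjI)
    fix j
    show "norm (1 - y * complex_of_real q ^ j) \<le> 1 + norm y * q ^ j"
      using norm_triangle_ineq4[of 1 "y * complex_of_real q ^ j"] assms
      by (simp add: norm_mult norm_power)
  qed auto
  also have "\<dots> \<le> exp (norm y / (1 - q))" using assms by (intro prod_exp_bound) auto
  finally show ?thesis .
qed

lemma qpoch_minus1_le:
  assumes "0 < q" "q < 1"
  shows "norm (qpoch y q k - 1) \<le> exp (norm y / (1 - q)) - 1"
proof -
  have "qpoch y q k = (\<Prod>j<k. 1 + (- y * complex_of_real q ^ j))" unfolding qpoch_def by simp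
  then have "norm (qpoch y q k - 1) \<le> (\<Prod>j<k. 1 + norm (- y * complex_of_real q ^ j)) - 1"
    using norm_prod_minus1_le_prod_minus1[of "\<lambda>j. - y * complex_of_real q ^ j" "{..<k}"] by simp
  also have "\<dots> = (\<Prod>j<k. 1 + norm y * q ^ j) - 1" using assms by (simp add: norm_mult norm_power)
  also have "\<dots> \<le> exp (norm y / (1 - q)) - 1" using assms by (simp add: prod_exp_bound)
  finally show ?thesis .
qed

lemma qpoch_inf_norm_le:
  assumes "0 < q" "q < 1"
  shows "norm (qpoch_inf y q) \<le> exp (norm y / (1 - q))"
  by (rule LIMSEQ_le_const2[OF tendsto_norm[OF qpoch_LIMSEQ[OF assms]]]) (use qpoch_norm_le[OF assms] in auto)

lemma qpoch_inf_minus1_le: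
  assumes "0 < q" "q < 1"
  shows "norm (qpoch_inf y q - 1) \<le> exp (norm y / (1 - q)) - 1"
  by (rule LIMSEQ_le_const2[OF tendsto_norm[OF tendsto_diff[OF qpoch_LIMSEQ[OF assms] tendsto_const]]])
    (use qpoch_minus1_le[OF assms] in auto)

lemma qpoch_inf_iter:
  assumes "0 < q" "q < 1"
  shows "qpoch_inf y q = qpoch y q N * qpoch_inf (y * complex_of_real q ^ N) q"
proof (induction N arbitrary: y)
  case 0 then show ?case by (simp add: qpoch_def)
next
  case (Suc N)
  have "qpoch_inf y q = (1 - y) * qpoch_inf (y * complex_of_real q) q" by (rule qpoch_inf_rec[OF assms])
  also have "qpoch_inf (y * complex_of_real q) q = qpoch (y * complex_of_real q) q N *
      qpoch_inf (y * complex_of_real q * complex_of_real q ^ N) q" by (rule Suc)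
  finally show ?case by (simp add: qpoch_Suc mult_ac)
qed

lemma qpoch_real_pos:
  assumes "0 < q" "q < 1" "0 \<le> y" "y < 1"
  shows "Im (qpoch_inf (complex_of_real y) q) = 0" "Re (qpoch_inf (complex_of_real y) q) > 0"
proof -
  have eq: "qpoch (complex_of_real y) q k = complex_of_real (\<Prod>j<k. 1 - y * q ^ j)" for k
    unfolding qpoch_def by simp
  have pos: "(\<Prod>j<k. 1 - y * q ^ j) > 0" for k
  proof (intro prod_pos ballI)
    fix j have "y * q ^ j \<le> y * 1" using assms by (intro mult_left_mono power_le_one) auto
    then show "0 < 1 - y * q ^ j" using assms by simp
  qed
  have L: "(\<lambda>k. qpoch (complex_of_real y) q k) \<longlonglongrightarrow> qpoch_inf (complex_of_real y) q"
    by (rule qpoch_LIMSEQ[OF assms(1,2)])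
  have "(\<lambda>k. Im (qpoch (complex_of_real y) q k)) \<longlonglongrightarrow> Im (qpoch_inf (complex_of_real y) q)"
    by (rule tendsto_Im[OF L])
  moreover have "Im (qpoch (complex_of_real y) q k) = 0" for k by (simp only: eq Im_complex_of_real)
  ultimately show im: "Im (qpoch_inf (complex_of_real y) q) = 0" by (simp add: LIMSEQ_const_iff)
  have "(\<lambda>k. Re (qpoch (complex_of_real y) q k)) \<longlonglongrightarrow> Re (qpoch_inf (complex_of_real y) q)"
    by (rule tendsto_Re[OF L])
  then have ge: "Re (qpoch_inf (complex_of_real y) q) \<ge> 0"
  proof (rule LIMSEQ_le_const)
    show "\<exists>N. \<forall>n\<ge>N. 0 \<le> Re (qpoch (complex_of_real y) q n)"
      using pos by (simp only: eq Re_complex_of_real) (auto intro: less_imp_le)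
  qed
  have "(\<lambda>N. exp (y * q ^ N / (1 - q)) - 1) \<longlonglongrightarrow> exp (y * 0 / (1 - q)) - 1"
    using assms by (intro tendsto_intros LIMSEQ_power_zero) auto
  then have "eventually (\<lambda>N. exp (y * q ^ N / (1 - q)) - 1 < 1) sequentially"
    by (rule order_tendstoD) simp
  then obtain N where N: "exp (y * q ^ N / (1 - q)) - 1 < 1" by (meson eventually_sequentially order_refl)
  have "norm (qpoch_inf (complex_of_real y * complex_of_real q ^ N) q - 1) < 1"
    using qpoch_inf_minus1_le[OF assms(1,2), of "complex_of_real y * complex_of_real q ^ N"] N assms
    by (simp add: norm_mult norm_power)
  then have nz: "qpoch_inf (complex_of_real y * complex_of_real q ^ N) q \<noteq> 0" by auto
  have "qpoch_inf (complex_of_real y) q \<noteq> 0"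
  proof -
    have "qpoch (complex_of_real y) q N \<noteq> 0" using pos[of N] by (simp only: eq of_real_eq_0_iff)
    then show ?thesis using qpoch_inf_iter[OF assms(1,2), of "complex_of_real y" N] nz by simp
  qed
  with im ge show "Re (qpoch_inf (complex_of_real y) q) > 0" using complex_eq_iff by fastforce
qed

definition dco :: "complex \<Rightarrow> complex \<Rightarrow> real \<Rightarrow> nat \<Rightarrow> complex" where
  "dco a t q k = complex_of_real q ^ (k * (k - 1) div 2) * qpoch a q k / qpoch (complex_of_real q) q k * t ^ k"

definition UU :: "complex \<Rightarrow> complex \<Rightarrow> complex \<Rightarrow> real \<Rightarrow> complex \<Rightarrow> complex" where
  "UU a b t q x = qpoch_phi11 a (b * x) q (- (t * x))"

lemma one_minus_Qpow_nz:
  assumes "0 < q" "q < 1" "n > 0"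
  shows "1 - complex_of_real q ^ n \<noteq> 0"
proof
  assume "1 - complex_of_real q ^ n = 0"
  then have "complex_of_real q ^ n = 1" by simp
  then have "norm (complex_of_real q ^ n) = 1" by simp
  then have "q ^ n = 1" using assms by (simp add: norm_power)
  moreover have "q ^ n < 1" using assms by (simp add: power_less_one_iff)
  ultimately show False by simp
qed

lemma qpochQ_nz:
  assumes "0 < q" "q < 1"
  shows "qpoch (complex_of_real q) q k \<noteq> 0"
proof -
  have f: "1 - complex_of_real q * complex_of_real q ^ j \<noteq> 0" for j
    using one_minus_Qpow_nz[OF assms, of "Suc j"] by simp
  show ?thesis unfolding qpoch_def using f by simp
qed

lemma tri_div: "Suc k * (Suc k - 1) div 2 = k * (k - 1) div 2 + k"
proof -
  have "Suc k * (Suc k - 1) = k * (k - 1) + 2 * k" by (cases k) (auto simp: algebra_simps)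
  then show ?thesis by simp
qed

lemma dco_Suc:
  assumes "0 < q" "q < 1"
  shows "dco a t q (Suc k) = dco a t q k * complex_of_real q ^ k * (1 - a * complex_of_real q ^ k)
           / (1 - complex_of_real q ^ Suc k) * t"
proof -
  have nz: "qpoch (complex_of_real q) q k \<noteq> 0" by (rule qpochQ_nz[OF assms])
  have nz2: "1 - complex_of_real q ^ Suc k \<noteq> 0" by (rule one_minus_Qpow_nz[OF assms]) simp
  show ?thesis
    unfolding dco_def tri_div qpoch_Suc' using nz nz2
    by (simp add: power_add field_simps)
qed

lemma dco_0: "dco a t q 0 = 1"
  by (simp add: dco_def qpoch_def)

lemma dco_norm_Suc:
  assumes "0 < q" "q < 1"
  shows "norm (dco a t q (Suc k)) \<le> norm (dco a t q k) * (q ^ k * ((1 + norm a) * norm t / (1 - q)))"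
proof -
  have n1: "norm (1 - a * complex_of_real q ^ k) \<le> 1 + norm a"
  proof -
    have "norm (1 - a * complex_of_real q ^ k) \<le> 1 + norm a * q ^ k"
      using norm_triangle_ineq4[of 1 "a * complex_of_real q ^ k"] assms by (simp add: norm_mult norm_power)
    also have "\<dots> \<le> 1 + norm a * 1" using assms by (intro add_left_mono mult_left_mono power_le_one) auto
    finally show ?thesis by simp
  qed
  have n2: "norm (1 - complex_of_real q ^ Suc k) \<ge> 1 - q"
  proof -
    have "norm (1 - complex_of_real q ^ Suc k) = 1 - q ^ Suc k"
    proof -
      have "1 - complex_of_real q ^ Suc k = complex_of_real (1 - q ^ Suc k)" by simp
      moreover have "q ^ Suc k \<le> 1" using assms by (intro power_le_one) auto
      ultimately show ?thesis by (simp only: norm_of_real)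
    qed
    moreover have "q ^ Suc k \<le> q" using assms by (simp add: power_le_one mult_left_le)
    ultimately show ?thesis by simp
  qed
  have qpos: "1 - q > 0" using assms by simp
  have "norm (dco a t q (Suc k)) = norm (dco a t q k) * q ^ k * norm (1 - a * complex_of_real q ^ k)
          / norm (1 - complex_of_real q ^ Suc k) * norm t"
    using assms by (simp add: dco_Suc[OF assms] norm_mult norm_divide norm_power)
  also have "\<dots> \<le> norm (dco a t q k) * q ^ k * (1 + norm a) / (1 - q) * norm t"
    using n1 n2 qpos assms
    by (intro mult_right_mono frac_le mult_left_mono) auto
  finally show ?thesis by (simp add: field_simps)
qed

lemma dco_summable:
  assumes "0 < q" "q < 1" "R \<ge> 0"
  shows "summable (\<lambda>k. norm (dco a t q k) * R ^ k)"
proof -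
  define C where "C = (1 + norm a) * norm t / (1 - q) * R"
  have C0: "C \<ge> 0" unfolding C_def using assms by auto
  have "(\<lambda>n. q ^ n * C) \<longlonglongrightarrow> 0 * C" using assms by (intro tendsto_intros LIMSEQ_power_zero) auto
  then have "eventually (\<lambda>n. q ^ n * C < 1/2) sequentially" by (rule order_tendstoD) simp
  then obtain N where N: "q ^ N * C < 1/2" by (meson eventually_sequentially order_refl)
  show ?thesis
  proof (rule summable_ratio_test[of "1/2" N])
    fix n assume "N \<le> n"
    then have "q ^ n \<le> q ^ N" using assms by (intro power_decreasing) auto
    then have qn: "q ^ n * C \<le> 1/2" using N C0 by (meson less_imp_le mult_right_mono order_trans)
    have "norm (norm (dco a t q (Suc n)) * R ^ Suc n)
        = norm (dco a t q (Suc n)) * R ^ Suc n" using assms by simp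
    also have "\<dots> \<le> norm (dco a t q n) * (q ^ n * ((1 + norm a) * norm t / (1 - q))) * R ^ Suc n"
      using assms by (intro mult_right_mono dco_norm_Suc) auto
    also have "\<dots> = (q ^ n * C) * (norm (dco a t q n) * R ^ n)" by (simp add: C_def algebra_simps)
    also have "\<dots> \<le> 1/2 * (norm (dco a t q n) * R ^ n)" using qn assms by (intro mult_right_mono) auto
    finally show "norm (norm (dco a t q (Suc n)) * R ^ Suc n) \<le> 1/2 * norm (norm (dco a t q n) * R ^ n)"
      using assms by simp
  qed simp
qed

lemma summable_dco_bdd:
  assumes "0 < q" "q < 1" "\<And>k. norm (p k) \<le> E"
  shows "summable (\<lambda>k. dco a t q k * y ^ k * p k)"
proof (rule summable_comparison_test')
  show "summable (\<lambda>k. norm (dco a t q k) * norm y ^ k * E)"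
    using dco_summable[OF assms(1,2), of "norm y"] by (intro summable_mult2) auto
  fix n
  have "norm (dco a t q n * y ^ n * p n) = norm (dco a t q n) * norm y ^ n * norm (p n)"
    by (simp add: norm_mult norm_power)
  also have "\<dots> \<le> norm (dco a t q n) * norm y ^ n * E" by (intro mult_left_mono assms) auto
  finally show "norm (dco a t q n * y ^ n * p n) \<le> norm (dco a t q n) * norm y ^ n * E" .
qed

lemma UU_eq: "UU a b t q x = (\<Sum>k. dco a t q k * x ^ k * qpoch_inf (b * x * complex_of_real q ^ k) q)"
proof -
  have m: "(-1::complex) ^ k * (-1) ^ k = 1" for k
    by (metis power_mult_distrib mult_minus1 minus_minus power_one)
  have eq: "(-1) ^ k * complex_of_real q ^ (k * (k - 1) div 2) * qpoch a q k * qpoch_inf (b * x * complex_of_real q ^ k) q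
        / qpoch (complex_of_real q) q k * (- (t * x)) ^ k =
        dco a t q k * x ^ k * qpoch_inf (b * x * complex_of_real q ^ k) q" for k
  proof -
    have p: "(- (t * x)) ^ k = (-1) ^ k * (t ^ k * x ^ k)" by (simp only: power_minus[of "t * x"] power_mult_distrib)
    have "(-1) ^ k * complex_of_real q ^ (k * (k - 1) div 2) * qpoch a q k * qpoch_inf (b * x * complex_of_real q ^ k) q
        / qpoch (complex_of_real q) q k * (- (t * x)) ^ k =
        ((-1) ^ k * (-1) ^ k) * (dco a t q k * x ^ k * qpoch_inf (b * x * complex_of_real q ^ k) q)"
      unfolding dco_def p by (simp only: divide_inverse mult_ac)
    also have "\<dots> = dco a t q k * x ^ k * qpoch_inf (b * x * complex_of_real q ^ k) q"
      by (simp only: m mult_1)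
    finally show ?thesis .
  qed
  show ?thesis unfolding UU_def qpoch_phi11_def by (intro arg_cong[where f=suminf] ext) (rule eq)
qed

lemma qpoch_inf_bd:
  assumes "0 < q" "q < 1"
  shows "norm (qpoch_inf (b * x * complex_of_real q ^ k) q) \<le> exp (norm b * norm x / (1 - q))"
proof -
  have "norm (b * x * complex_of_real q ^ k) \<le> norm b * norm x"
  proof -
    have "norm (b * x * complex_of_real q ^ k) = norm b * norm x * q ^ k" using assms by (simp add: norm_mult norm_power)
    also have "\<dots> \<le> norm b * norm x * 1" using assms by (intro mult_left_mono power_le_one) auto
    finally show ?thesis by simp
  qed
  then have "exp (norm (b * x * complex_of_real q ^ k) / (1 - q)) \<le> exp (norm b * norm x / (1 - q))"
    using assms by (intro exp_mono divide_right_mono) auto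
  then show ?thesis using qpoch_inf_norm_le[OF assms] order_trans by blast
qed

lemma contiguous:
  assumes q: "0 < q" "q < 1" and zb: "z * b = 1 + s" and t: "t = s / z" and z: "z \<noteq> 0"
  shows "z * UU a b t q x + (x - z) * UU a b t q (complex_of_real q * x)
         + s * x * (a - b * complex_of_real q * x) * UU a b t q (complex_of_real q * complex_of_real q * x) = 0"
proof -
  define Q where "Q = complex_of_real q"
  define P where "P k = qpoch_inf (b * x * Q ^ k) q" for k
  define E where "E = exp (norm b * norm x / (1 - q))"
  define d where "d = dco a t q"
  have Prec: "P k = (1 - b * x * Q ^ k) * P (Suc k)" for k
    unfolding P_def using qpoch_inf_rec[OF q, of "b * x * Q ^ k"] by (simp add: Q_def mult_ac)
  have PE: "norm (P k) \<le> E" for k unfolding P_def E_def Q_def by (rule qpoch_inf_bd[OF q])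
  have U1: "UU a b t q x = (\<Sum>k. d k * x ^ k * P k)"
    unfolding UU_eq P_def Q_def d_def ..
  have U2: "UU a b t q (Q * x) = (\<Sum>k. d k * (Q * x) ^ k * P (Suc k))"
    unfolding UU_eq P_def d_def by (simp add: Q_def mult_ac)
  have U3: "UU a b t q (Q * Q * x) = (\<Sum>k. d k * (Q * Q * x) ^ k * P (Suc (Suc k)))"
    unfolding UU_eq P_def d_def by (simp add: Q_def mult_ac)
  have S1: "summable (\<lambda>k. d k * x ^ k * P k)" unfolding d_def by (rule summable_dco_bdd[OF q PE])
  have S2: "summable (\<lambda>k. d k * (Q * x) ^ k * P (Suc k))" unfolding d_def by (rule summable_dco_bdd[OF q PE])
  have S3: "summable (\<lambda>k. d k * (Q * Q * x) ^ k * P (Suc (Suc k)))" unfolding d_def by (rule summable_dco_bdd[OF q PE])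
  define T where "T k = z * (d k * x ^ k * P k) + (x - z) * (d k * (Q * x) ^ k * P (Suc k))
      + s * x * (a - b * Q * x) * (d k * (Q * Q * x) ^ k * P (Suc (Suc k)))" for k
  have Tsums: "T sums (z * UU a b t q x + (x - z) * UU a b t q (Q * x)
         + s * x * (a - b * Q * x) * UU a b t q (Q * Q * x))"
    unfolding T_def U1 U2 U3
    by (intro sums_add sums_mult summable_sums S1 S2 S3)
  define F where "F k = z * (1 - Q ^ k) * d k * x ^ k * P (Suc k)" for k
  have Fsuc: "F (Suc k) = s * Q ^ k * (1 - a * Q ^ k) * d k * x ^ Suc k * P (Suc (Suc k))" for k
  proof -
    have nz: "1 - Q ^ Suc k \<noteq> 0" unfolding Q_def by (rule one_minus_Qpow_nz[OF q]) simp
    have eq: "z * (1 - Q ^ Suc k) * d (Suc k) = s * Q ^ k * (1 - a * Q ^ k) * d k"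
      unfolding d_def dco_Suc[OF q] Q_def[symmetric] using nz z by (simp add: t field_simps)
    have "F (Suc k) = (z * (1 - Q ^ Suc k) * d (Suc k)) * x ^ Suc k * P (Suc (Suc k))"
      unfolding F_def by (simp only: mult.assoc)
    also have "\<dots> = (s * Q ^ k * (1 - a * Q ^ k) * d k) * x ^ Suc k * P (Suc (Suc k))" by (simp only: eq)
    finally show ?thesis by (simp only: mult.assoc)
  qed
  have F0: "F 0 = 0" unfolding F_def by simp
  have Teq: "T k = F k - F (Suc k)" for k
  proof -
    have s: "s = z * b - 1" using zb by simp
    have p1: "P (Suc k) = (1 - b * x * Q ^ Suc k) * P (Suc (Suc k))" by (rule Prec)
    have p0: "P k = (1 - b * x * Q ^ k) * ((1 - b * x * Q ^ Suc k) * P (Suc (Suc k)))"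
      using Prec[of k] p1 by simp
    show ?thesis unfolding T_def Fsuc F_def[of k] p0 p1 s
      by (simp add: power_mult_distrib power_Suc algebra_simps)
  qed
  have Flim: "F \<longlonglongrightarrow> 0"
  proof -
    have "(\<lambda>k. norm (d k) * norm x ^ k) \<longlonglongrightarrow> 0"
      using summable_LIMSEQ_zero[OF dco_summable[OF q, of "norm x" a t]] unfolding d_def by simp
    then have lim: "(\<lambda>k. norm s * (1 + norm a) * norm x * E * (norm (d k) * norm x ^ k)) \<longlonglongrightarrow> 0"
      by (metis mult_zero_right tendsto_mult_left)
    have "(\<lambda>k. F (Suc k)) \<longlonglongrightarrow> 0"
    proof (rule Lim_null_comparison[OF _ lim], rule always_eventually, rule allI)
      fix k
      have na: "norm (1 - a * Q ^ k) \<le> 1 + norm a"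
      proof -
        have "norm (1 - a * Q ^ k) \<le> 1 + norm a * q ^ k"
          using norm_triangle_ineq4[of 1 "a * Q ^ k"] q by (simp add: Q_def norm_mult norm_power)
        also have "\<dots> \<le> 1 + norm a * 1" using q by (intro add_left_mono mult_left_mono power_le_one) auto
        finally show ?thesis by simp
      qed
      have nq: "norm (Q ^ k) \<le> 1" using q by (simp add: Q_def norm_power power_le_one)
      have "norm (F (Suc k)) = norm s * norm (Q ^ k) * norm (1 - a * Q ^ k) * (norm (d k) * norm x ^ k) * norm x * norm (P (Suc (Suc k)))"
        unfolding Fsuc by (simp add: norm_mult norm_power mult_ac)
      also have "\<dots> \<le> norm s * 1 * (1 + norm a) * (norm (d k) * norm x ^ k) * norm x * E"
        by (intro mult_mono mult_left_mono na nq PE) auto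
      finally show "norm (F (Suc k)) \<le> norm s * (1 + norm a) * norm x * E * (norm (d k) * norm x ^ k)"
        by (simp add: mult_ac)
    qed
    then show ?thesis by (rule LIMSEQ_imp_Suc)
  qed
  have "T sums 0"
    using telescope_sums'[OF Flim] F0 by (simp add: Teq[abs_def])
  with Tsums show ?thesis unfolding Q_def using sums_unique2 by blast
qed

lemma qpoch_inf_bd1:
  assumes "0 < q" "q < 1" "norm x \<le> 1"
  shows "norm (qpoch_inf (b * x * complex_of_real q ^ k) q) \<le> exp (norm b / (1 - q))"
proof -
  have "norm b * norm x \<le> norm b * 1" using assms by (intro mult_left_mono) auto
  then have "exp (norm b * norm x / (1 - q)) \<le> exp (norm b / (1 - q))"
    using assms by (intro exp_mono divide_right_mono) auto
  then show ?thesis using order_trans[OF qpoch_inf_bd[OF assms(1,2), of b x k]] by blast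
qed

lemma UU_bound:
  assumes "0 < q" "q < 1" "norm x \<le> 1"
  shows "norm (UU a b t q x) \<le> (\<Sum>k. norm (dco a t q k) * 1 ^ k) * exp (norm b / (1 - q))"
proof -
  have "norm (UU a b t q x) \<le> (\<Sum>k. norm (dco a t q k) * 1 ^ k * exp (norm b / (1 - q)))"
    unfolding UU_eq
  proof (rule norm_suminf_le)
    fix k
    have "norm (dco a t q k * x ^ k * qpoch_inf (b * x * complex_of_real q ^ k) q)
       = norm (dco a t q k) * norm x ^ k * norm (qpoch_inf (b * x * complex_of_real q ^ k) q)"
      by (simp add: norm_mult norm_power)
    also have "\<dots> \<le> norm (dco a t q k) * 1 ^ k * exp (norm b / (1 - q))"
      using assms by (intro mult_mono power_mono qpoch_inf_bd1) auto
    finally show "norm (dco a t q k * x ^ k * qpoch_inf (b * x * complex_of_real q ^ k) q)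
       \<le> norm (dco a t q k) * 1 ^ k * exp (norm b / (1 - q))" .
  next
    show "summable (\<lambda>k. norm (dco a t q k) * 1 ^ k * exp (norm b / (1 - q)))"
      using assms by (intro summable_mult2 dco_summable) auto
  qed
  also have "\<dots> = (\<Sum>k. norm (dco a t q k) * 1 ^ k) * exp (norm b / (1 - q))"
    using assms by (intro suminf_mult2[symmetric] dco_summable) auto
  finally show ?thesis .
qed

lemma UU_minus1_bound:
  assumes "0 < q" "q < 1" "norm x \<le> 1"
  shows "norm (UU a b t q x - 1) \<le> (exp (norm b * norm x / (1 - q)) - 1)
          + norm x * ((\<Sum>k. norm (dco a t q (Suc k)) * 1 ^ k) * exp (norm b / (1 - q)))"
proof -
  define f where "f k = dco a t q k * x ^ k * qpoch_inf (b * x * complex_of_real q ^ k) q" for k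
  define E where "E = exp (norm b / (1 - q))"
  have sf: "summable f" unfolding f_def
    using qpoch_inf_bd[OF assms(1,2)] by (intro summable_dco_bdd[OF assms(1,2)]) 
  have "UU a b t q x = (\<Sum>k. f (Suc k)) + f 0" unfolding UU_eq f_def[symmetric] using suminf_split_head[OF sf] by simp
  moreover have "f 0 = qpoch_inf (b * x) q" unfolding f_def by (simp add: dco_0)
  ultimately have "UU a b t q x - 1 = (qpoch_inf (b * x) q - 1) + (\<Sum>k. f (Suc k))" by simp
  then have "norm (UU a b t q x - 1) \<le> norm (qpoch_inf (b * x) q - 1) + norm (\<Sum>k. f (Suc k))"
    by (metis norm_triangle_ineq)
  also have "norm (qpoch_inf (b * x) q - 1) \<le> exp (norm b * norm x / (1 - q)) - 1"
    using qpoch_inf_minus1_le[OF assms(1,2), of "b * x"] by (simp add: norm_mult)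
  also have "norm (\<Sum>k. f (Suc k)) \<le> (\<Sum>k. norm x * (norm (dco a t q (Suc k)) * 1 ^ k * E))"
  proof (rule norm_suminf_le)
    fix k
    have "norm (f (Suc k)) = norm x * (norm (dco a t q (Suc k)) * norm x ^ k * norm (qpoch_inf (b * x * complex_of_real q ^ Suc k) q))"
      unfolding f_def by (simp add: norm_mult norm_power mult_ac)
    also have "\<dots> \<le> norm x * (norm (dco a t q (Suc k)) * 1 ^ k * E)"
      unfolding E_def using assms by (intro mult_left_mono mult_mono power_mono qpoch_inf_bd1) auto
    finally show "norm (f (Suc k)) \<le> norm x * (norm (dco a t q (Suc k)) * 1 ^ k * E)" .
  next
    have "summable (\<lambda>k. norm (dco a t q k) * 1 ^ k)" using assms by (intro dco_summable) auto
    then have "summable (\<lambda>k. norm (dco a t q (Suc k)) * 1 ^ k)" by (subst (asm) summable_Suc_iff[symmetric]) simp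
    then show "summable (\<lambda>k. norm x * (norm (dco a t q (Suc k)) * 1 ^ k * E))"
      by (intro summable_mult summable_mult2)
  qed
  also have "(\<Sum>k. norm x * (norm (dco a t q (Suc k)) * 1 ^ k * E)) = norm x * ((\<Sum>k. norm (dco a t q (Suc k)) * 1 ^ k) * E)"
  proof -
    have "summable (\<lambda>k. norm (dco a t q k) * 1 ^ k)" using assms by (intro dco_summable) auto
    then have s: "summable (\<lambda>k. norm (dco a t q (Suc k)) * 1 ^ k)" by (subst (asm) summable_Suc_iff[symmetric]) simp
    show ?thesis using suminf_mult[OF summable_mult2[OF s, of E], of "norm x"] suminf_mult2[OF s, of E] by simp
  qed
  finally show ?thesis unfolding E_def by simp
qed

lemma UU_tendsto1:
  assumes "0 < q" "q < 1"
  shows "(\<lambda>n. UU a b t q (complex_of_real q ^ n)) \<longlonglongrightarrow> 1"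
proof -
  define C where "C = (\<Sum>k. norm (dco a t q (Suc k)) * 1 ^ k) * exp (norm b / (1 - q))"
  have g: "(\<lambda>n. (exp (norm b * q ^ n / (1 - q)) - 1) + q ^ n * C) \<longlonglongrightarrow> (exp (norm b * 0 / (1 - q)) - 1) + 0 * C"
    using assms by (intro tendsto_intros LIMSEQ_power_zero) auto
  have "(\<lambda>n. UU a b t q (complex_of_real q ^ n) - 1) \<longlonglongrightarrow> 0"
  proof (rule Lim_null_comparison[OF always_eventually])
    show "\<forall>n. norm (UU a b t q (complex_of_real q ^ n) - 1) \<le> (exp (norm b * q ^ n / (1 - q)) - 1) + q ^ n * C"
    proof
      fix n
      have nq: "norm (complex_of_real q ^ n) = q ^ n" using assms by (simp add: norm_power)
      have "norm (complex_of_real q ^ n) \<le> 1" using assms nq by (simp add: power_le_one)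
      from UU_minus1_bound[OF assms this, of a b t] show "norm (UU a b t q (complex_of_real q ^ n) - 1) \<le> (exp (norm b * q ^ n / (1 - q)) - 1) + q ^ n * C"
        unfolding nq C_def by simp
    qed
  qed (use g in simp)
  then show ?thesis using tendsto_add[OF _ tendsto_const[of 1]] by fastforce
qed

lemma powr_lt1:
  fixes q e :: real
  assumes "0 < q" "q < 1" "0 < e"
  shows "q powr e < 1"
proof -
  have "ln q < 0" using assms by simp
  then have "e * ln q < 0" using assms by (simp add: mult_pos_neg)
  then show ?thesis using assms by (simp add: powr_def)
qed

locale jset =
  fixes q \<sigma> \<gamma> :: real and z :: complex
  assumes q0: "0 < q" and q1: "q < 1" and sig: "\<sigma> \<noteq> 0" and gam: "\<gamma> > -1" and z0: "z \<noteq> 0"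
begin

definition "QQ = complex_of_real q"
definition "aa = complex_of_real (q powr (- \<gamma>) * (cosh (\<sigma>/2))\<^sup>2) / z"
definition "bb = complex_of_real ((cosh (\<sigma>/2))\<^sup>2) / z"
definition "tt = complex_of_real ((sinh (\<sigma>/2))\<^sup>2) / z"
definition "SS = complex_of_real ((sinh (\<sigma>/2))\<^sup>2)"
definition "u n = UU aa bb tt q (QQ ^ n)"
definition "R n = Re (qpoch_inf (complex_of_real (q powr (\<gamma> + real n))) q)"
definition "K n = q powr (- \<gamma> * real n / 2 + real n * (real n - 3) / 4) * sinh \<sigma> ^ n / sqrt (R n)"
definition "kap n = complex_of_real (K n) * inverse (2 * z) ^ n"
definition "D n = 1 - q powr (real n + \<gamma>)"
definition "rr n = q powr ((real n - \<gamma> - 1) / 2) * sinh \<sigma> * sqrt (D n)"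
definition "rho n = complex_of_real (rr n) / (2 * z)"

abbreviation "w \<equiv> jac_off q \<sigma> \<gamma>"

lemma D_pos: "n \<ge> 1 \<Longrightarrow> D n > 0"
  unfolding D_def using powr_lt1[OF q0 q1, of "real n + \<gamma>"] gam by simp

lemma D_le1: "D n \<le> 1"
  unfolding D_def by simp

lemma R_props: "n \<ge> 1 \<Longrightarrow> R n > 0 \<and> Im (qpoch_inf (complex_of_real (q powr (\<gamma> + real n))) q) = 0"
proof -
  assume n: "n \<ge> 1"
  have "q powr (\<gamma> + real n) < 1" using powr_lt1[OF q0 q1, of "\<gamma> + real n"] gam n by simp
  then show ?thesis unfolding R_def using qpoch_real_pos[OF q0 q1, of "q powr (\<gamma> + real n)"] by simp
qed

lemma R_rec: "R n = D n * R (Suc n)"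
proof -
  have e: "complex_of_real (q powr (\<gamma> + real n)) * complex_of_real q = complex_of_real (q powr (\<gamma> + real (Suc n)))"
    using q0 by (simp add: powr_add)
  show ?thesis
    unfolding R_def D_def using qpoch_inf_rec[OF q0 q1, of "complex_of_real (q powr (\<gamma> + real n))"]
    by (simp add: e add.commute)
qed

lemma K_Suc: "n \<ge> 1 \<Longrightarrow> K (Suc n) = K n * rr n"
proof -
  assume n: "n \<ge> 1"
  have Dp: "D n > 0" using D_pos n by simp
  have Rp: "R (Suc n) > 0" using R_props[of "Suc n"] by simp
  have sR: "sqrt (R n) = sqrt (D n) * sqrt (R (Suc n))" using R_rec[of n] by (simp add: real_sqrt_mult)
  have ex: "- \<gamma> * real (Suc n) / 2 + real (Suc n) * (real (Suc n) - 3) / 4 =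
            (- \<gamma> * real n / 2 + real n * (real n - 3) / 4) + (real n - \<gamma> - 1) / 2"
    by (simp add: field_simps)
  have "q powr (- \<gamma> * real (Suc n) / 2 + real (Suc n) * (real (Suc n) - 3) / 4) =
        q powr (- \<gamma> * real n / 2 + real n * (real n - 3) / 4) * q powr ((real n - \<gamma> - 1) / 2)"
    unfolding ex by (rule powr_add)
  then show ?thesis unfolding K_def rr_def sR using Dp Rp by (simp add: field_simps)
qed

lemma kap_Suc: "n \<ge> 1 \<Longrightarrow> kap (Suc n) = kap n * rho n"
  unfolding kap_def rho_def using K_Suc z0 by (simp add: field_simps)

lemma K_nz: "n \<ge> 1 \<Longrightarrow> K n \<noteq> 0"
  unfolding K_def using R_props[of n] q0 sig by simp

lemma kap_nz: "n \<ge> 1 \<Longrightarrow> kap n \<noteq> 0"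
  unfolding kap_def using K_nz z0 by simp

lemma w_eq: "complex_of_real (w n) = z * rho n"
  unfolding rho_def rr_def D_def jac_off_def using z0 by (simp add: field_simps)

lemma w_nz: "n \<ge> 1 \<Longrightarrow> w n \<noteq> 0"
  using D_pos[of n] q0 sig unfolding jac_off_def D_def by simp

lemma sinh_sq: "(sinh \<sigma>)\<^sup>2 = 4 * (sinh (\<sigma>/2))\<^sup>2 * (cosh (\<sigma>/2))\<^sup>2"
proof -
  have "sinh \<sigma> = 2 * sinh (\<sigma>/2) * cosh (\<sigma>/2)" using sinh_double[of "\<sigma>/2"] by simp
  then show ?thesis by (simp add: power2_eq_square)
qed

lemma w_rho: "complex_of_real (w (Suc m)) * rho (Suc m) = SS * QQ ^ m * (aa - bb * QQ * QQ ^ m)"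
proof -
  have Dp: "D (Suc m) \<ge> 0" using D_pos[of "Suc m"] by simp
  have p1: "q powr ((real (Suc m) - \<gamma> - 1) / 2) * q powr ((real (Suc m) - \<gamma> - 1) / 2) = q ^ m * q powr (-\<gamma>)"
  proof -
    have "q powr ((real (Suc m) - \<gamma> - 1) / 2) * q powr ((real (Suc m) - \<gamma> - 1) / 2) = q powr (real m + (-\<gamma>))"
      by (simp add: powr_add[symmetric])
    also have "\<dots> = q ^ m * q powr (-\<gamma>)" by (metis powr_add powr_realpow q0)
    finally show ?thesis .
  qed
  have p2: "q powr (- \<gamma>) * q powr (real (Suc m) + \<gamma>) = q * q ^ m"
  proof -
    have "q powr (- \<gamma>) * q powr (real (Suc m) + \<gamma>) = q powr (real (Suc m))" by (simp add: powr_add[symmetric])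
    also have "\<dots> = q * q ^ m" by (metis powr_realpow q0 power_Suc)
    finally show ?thesis .
  qed
  have real_id: "w (Suc m) * rr (Suc m) = (sinh (\<sigma>/2))\<^sup>2 * q ^ m * (q powr (-\<gamma>) * (cosh (\<sigma>/2))\<^sup>2 - (cosh (\<sigma>/2))\<^sup>2 * q * q ^ m) * 2"
  proof -
    have "w (Suc m) * rr (Suc m) = 1/2 * (sinh \<sigma>)\<^sup>2 * (q powr ((real (Suc m) - \<gamma> - 1) / 2) * q powr ((real (Suc m) - \<gamma> - 1) / 2)) * (sqrt (D (Suc m)))\<^sup>2"
      unfolding jac_off_def rr_def D_def by (simp add: power2_eq_square mult_ac)
    also have "\<dots> = 1/2 * (sinh \<sigma>)\<^sup>2 * (q ^ m * q powr (-\<gamma>)) * (1 - q powr (real (Suc m) + \<gamma>))"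
      unfolding p1 using Dp by (simp add: D_def)
    also have "\<dots> = 2 * (sinh (\<sigma>/2))\<^sup>2 * (cosh (\<sigma>/2))\<^sup>2 * q ^ m * (q powr (-\<gamma>) - q powr (- \<gamma>) * q powr (real (Suc m) + \<gamma>))"
      unfolding sinh_sq by (simp add: algebra_simps)
    also have "\<dots> = (sinh (\<sigma>/2))\<^sup>2 * q ^ m * (q powr (-\<gamma>) * (cosh (\<sigma>/2))\<^sup>2 - (cosh (\<sigma>/2))\<^sup>2 * q * q ^ m) * 2"
      unfolding p2 by (simp add: algebra_simps)
    finally show ?thesis .
  qed
  have "complex_of_real (w (Suc m)) * rho (Suc m) = complex_of_real (w (Suc m) * rr (Suc m)) / (2 * z)"
    unfolding rho_def by simp
  also have "\<dots> = SS * QQ ^ m * (aa - bb * QQ * QQ ^ m)"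
    unfolding real_id SS_def QQ_def aa_def bb_def using z0 by (simp add: field_simps)
  finally show ?thesis .
qed

end

context jset begin

definition "V n = kap n * u n"

lemma eigvec_eq: "eigvec q \<sigma> \<gamma> z = V"
proof
  fix n
  have e1: "bb * QQ ^ n = complex_of_real (q ^ n * (cosh (\<sigma>/2))\<^sup>2) / z" by (simp add: bb_def QQ_def)
  have e2: "- (tt * QQ ^ n) = - complex_of_real (q ^ n * (sinh (\<sigma>/2))\<^sup>2) / z" by (simp add: tt_def QQ_def)
  show "eigvec q \<sigma> \<gamma> z n = V n"
    unfolding eigvec_def V_def u_def UU_def e1 e2 kap_def K_def R_def aa_def by simp
qed

lemma F_eq: "qpoch_phi11 (complex_of_real (q powr (- \<gamma>) * (cosh (\<sigma>/2))\<^sup>2) / z)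
                       (complex_of_real ((cosh (\<sigma>/2))\<^sup>2) / z) q
                       (- complex_of_real ((sinh (\<sigma>/2))\<^sup>2) / z) = u 0"
  unfolding u_def UU_def aa_def bb_def tt_def by simp

lemma contig_u: "z * u m + (QQ ^ m - z) * u (Suc m) + SS * QQ ^ m * (aa - bb * QQ * QQ ^ m) * u (Suc (Suc m)) = 0"
proof -
  have zb: "z * bb = 1 + SS" unfolding bb_def SS_def using z0
    by (simp add: cosh_square_eq[of "\<sigma>/2"])
  have t: "tt = SS / z" unfolding tt_def SS_def ..
  have "z * UU aa bb tt q (QQ ^ m) + (QQ ^ m - z) * UU aa bb tt q (complex_of_real q * QQ ^ m)
         + SS * QQ ^ m * (aa - bb * complex_of_real q * QQ ^ m) * UU aa bb tt q (complex_of_real q * complex_of_real q * QQ ^ m) = 0"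
    by (rule contiguous[OF q0 q1 zb t z0])
  moreover have "complex_of_real q * QQ ^ m = QQ ^ Suc m" "complex_of_real q * complex_of_real q * QQ ^ m = QQ ^ Suc (Suc m)"
    by (simp_all add: QQ_def)
  ultimately show ?thesis unfolding u_def by (simp add: QQ_def mult.assoc)
qed

lemma V_Suc: "m \<ge> 1 \<Longrightarrow> V (Suc m) = kap m * rho m * u (Suc m)"
  unfolding V_def using kap_Suc by simp

lemma rec_V:
  assumes m: "m \<ge> 1"
  shows "jac_apply q \<sigma> \<gamma> V (Suc m) = z * V (Suc m)"
proof -
  have k2: "kap (Suc (Suc m)) = kap m * rho m * rho (Suc m)" using kap_Suc m by simp
  have "jac_apply q \<sigma> \<gamma> V (Suc m) = complex_of_real (w m) * V m + QQ ^ m * V (Suc m)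
        + complex_of_real (w (Suc m)) * V (Suc (Suc m))"
    using m unfolding jac_apply_def jac_diag_def QQ_def by simp
  also have "complex_of_real (w (Suc m)) * V (Suc (Suc m)) = kap m * rho m * (complex_of_real (w (Suc m)) * rho (Suc m)) * u (Suc (Suc m))"
    unfolding V_def k2 by (simp add: algebra_simps)
  also have "complex_of_real (w m) * V m = kap m * rho m * (z * u m)"
    unfolding V_def w_eq by (simp add: algebra_simps)
  also have "QQ ^ m * V (Suc m) = kap m * rho m * (QQ ^ m * u (Suc m))"
    using V_Suc[OF m] by (simp add: algebra_simps)
  finally have "jac_apply q \<sigma> \<gamma> V (Suc m) = kap m * rho m * (z * u m + QQ ^ m * u (Suc m) + SS * QQ ^ m * (aa - bb * QQ * QQ ^ m) * u (Suc (Suc m)))"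
    unfolding w_rho by (simp add: algebra_simps)
  also have "z * u m + QQ ^ m * u (Suc m) + SS * QQ ^ m * (aa - bb * QQ * QQ ^ m) * u (Suc (Suc m)) = z * u (Suc m)"
    using contig_u[of m] by (simp add: algebra_simps)
  finally show ?thesis using V_Suc[OF m] by (simp add: algebra_simps)
qed

lemma eq1_V: "jac_apply q \<sigma> \<gamma> V 1 - z * V 1 = - kap 1 * z * u 0"
proof -
  have k2: "kap 2 = kap 1 * rho 1" using kap_Suc[of 1] by (simp add: numeral_2_eq_2)
  have "jac_apply q \<sigma> \<gamma> V 1 = V 1 + complex_of_real (w 1) * V 2"
    unfolding jac_apply_def jac_diag_def by simp
  also have "complex_of_real (w 1) * V 2 = kap 1 * (complex_of_real (w 1) * rho 1) * u 2"
    unfolding V_def k2 by (simp add: algebra_simps)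
  also have "complex_of_real (w 1) * rho 1 = SS * (aa - bb * QQ)"
    using w_rho[of 0] by simp
  finally have "jac_apply q \<sigma> \<gamma> V 1 - z * V 1 = kap 1 * ((1 - z) * u 1 + SS * (aa - bb * QQ) * u 2)"
    unfolding V_def by (simp add: algebra_simps)
  also have "(1 - z) * u 1 + SS * (aa - bb * QQ) * u 2 = - z * u 0"
    using contig_u[of 0] by (simp add: algebra_simps numeral_2_eq_2)
  finally show ?thesis by simp
qed

lemma eq1_iff: "jac_apply q \<sigma> \<gamma> V 1 = z * V 1 \<longleftrightarrow> u 0 = 0"
proof -
  have "jac_apply q \<sigma> \<gamma> V 1 = z * V 1 \<longleftrightarrow> jac_apply q \<sigma> \<gamma> V 1 - z * V 1 = 0" by simp
  also have "\<dots> \<longleftrightarrow> kap 1 * z * u 0 = 0" unfolding eq1_V by simp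
  also have "\<dots> \<longleftrightarrow> u 0 = 0" using kap_nz[of 1] z0 by simp
  finally show ?thesis .
qed

end

context jset begin

definition "sq = q powr (1/2)"
definition "Cr = q powr (- \<gamma> / 2) * \<bar>sinh \<sigma>\<bar> / (2 * norm z)"

lemma sq_props: "0 < sq" "sq < 1"
  unfolding sq_def using q0 powr_lt1[OF q0 q1, of "1/2"] by auto

lemma qpow_sq: "q powr ((real (Suc n) - \<gamma> - 1) / 2) = q powr (- \<gamma> / 2) * sq ^ n"
proof -
  have ex: "(real (Suc n) - \<gamma> - 1) / 2 = - \<gamma> / 2 + 1/2 * real n" by (simp add: field_simps)
  have "q powr ((real (Suc n) - \<gamma> - 1) / 2) = q powr (- \<gamma> / 2 + 1/2 * real n)" by (simp only: ex)
  also have "\<dots> = q powr (- \<gamma> / 2) * q powr (1/2 * real n)" by (rule powr_add)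
  also have "q powr (1/2 * real n) = sq ^ n"
  proof -
    have "sq ^ n = sq powr real n" using sq_props by (simp add: powr_realpow)
    also have "\<dots> = q powr (1/2 * real n)" unfolding sq_def by (rule powr_powr)
    finally show ?thesis by simp
  qed
  finally show ?thesis .
qed

lemma rho_bound: "norm (rho (Suc n)) \<le> Cr * sq ^ n"
proof -
  have D0: "0 \<le> D (Suc n)" using D_pos[of "Suc n"] by simp
  have sD: "sqrt (D (Suc n)) \<le> 1" using D_le1[of "Suc n"] by simp
  have "\<bar>rr (Suc n)\<bar> = q powr (- \<gamma> / 2) * sq ^ n * \<bar>sinh \<sigma>\<bar> * sqrt (D (Suc n))"
    unfolding rr_def qpow_sq using D0 sq_props q0 by (simp add: abs_mult)
  also have "\<dots> \<le> q powr (- \<gamma> / 2) * sq ^ n * \<bar>sinh \<sigma>\<bar> * 1"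
    using sD sq_props q0 by (intro mult_left_mono) auto
  finally have r: "\<bar>rr (Suc n)\<bar> \<le> q powr (- \<gamma> / 2) * sq ^ n * \<bar>sinh \<sigma>\<bar>" by simp
  have "norm (rho (Suc n)) = \<bar>rr (Suc n)\<bar> / (2 * norm z)"
    unfolding rho_def by (simp add: norm_divide norm_mult)
  also have "\<dots> \<le> q powr (- \<gamma> / 2) * sq ^ n * \<bar>sinh \<sigma>\<bar> / (2 * norm z)"
    using r z0 by (intro divide_right_mono) auto
  finally show ?thesis unfolding Cr_def by (simp add: field_simps)
qed

lemma rho_lim: "(\<lambda>n. rho (Suc n)) \<longlonglongrightarrow> 0"
proof (rule Lim_null_comparison[OF always_eventually])
  show "\<forall>n. norm (rho (Suc n)) \<le> Cr * sq ^ n" using rho_bound by blast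
  show "(\<lambda>n. Cr * sq ^ n) \<longlonglongrightarrow> 0"
    using sq_props by (metis LIMSEQ_power_zero mult_zero_right tendsto_mult_left abs_of_pos real_norm_def)
qed

lemma w_lim: "(\<lambda>n. complex_of_real (w (Suc n))) \<longlonglongrightarrow> 0"
  unfolding w_eq using tendsto_mult_left[OF rho_lim, of z] by simp

lemma u_bound: "\<exists>B. \<forall>n. norm (u n) \<le> B"
proof
  show "\<forall>n. norm (u n) \<le> (\<Sum>k. norm (dco aa tt q k) * 1 ^ k) * exp (norm bb / (1 - q))"
  proof
    fix n
    have "norm (QQ ^ n) \<le> 1" unfolding QQ_def using q0 q1 by (simp add: norm_power power_le_one)
    then show "norm (u n) \<le> (\<Sum>k. norm (dco aa tt q k) * 1 ^ k) * exp (norm bb / (1 - q))"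
      unfolding u_def by (rule UU_bound[OF q0 q1])
  qed
qed

lemma u_lim: "u \<longlonglongrightarrow> 1"
  unfolding u_def QQ_def by (rule UU_tendsto1[OF q0 q1])

lemma kap_sq_summable: "summable (\<lambda>n. (norm (kap (Suc n)))\<^sup>2)"
proof -
  have "eventually (\<lambda>n. norm (rho (Suc n)) < 1/2) sequentially"
    using order_tendstoD(2)[OF tendsto_norm[OF rho_lim], of "1/2"] by simp
  then obtain N where N: "\<And>n. n \<ge> N \<Longrightarrow> norm (rho (Suc n)) < 1/2" by (auto simp: eventually_sequentially)
  show ?thesis
  proof (rule summable_ratio_test[of "1/2" N])
    fix n assume "N \<le> n"
    then have r: "norm (rho (Suc n)) < 1/2" by (rule N)
    have "(norm (rho (Suc n)))\<^sup>2 \<le> 1/2"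
    proof -
      have "(norm (rho (Suc n)))\<^sup>2 \<le> (1/2)\<^sup>2" using r by (intro power_mono) auto
      then show ?thesis by (simp add: power2_eq_square)
    qed
    moreover have "kap (Suc (Suc n)) = kap (Suc n) * rho (Suc n)" by (rule kap_Suc) simp
    then have "(norm (kap (Suc n)))\<^sup>2 * (norm (rho (Suc n)))\<^sup>2 \<le> (norm (kap (Suc n)))\<^sup>2 * (1/2)"
      using calculation by (intro mult_left_mono) auto
    ultimately show "norm ((norm (kap (Suc (Suc n))))\<^sup>2) \<le> 1/2 * norm ((norm (kap (Suc n)))\<^sup>2)"
      using kap_Suc[of "Suc n"] by (simp add: norm_mult power_mult_distrib)
  qed simp
qed

lemma V_l2: "in_l2 V"
proof -
  obtain B where B: "\<And>n. norm (u n) \<le> B" using u_bound by blast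
  have B0: "B \<ge> 0" using B[of 0] norm_ge_zero order_trans by blast
  show ?thesis unfolding in_l2_def
  proof (rule summable_comparison_test')
    show "summable (\<lambda>n. B\<^sup>2 * (norm (kap (Suc n)))\<^sup>2)" by (intro summable_mult kap_sq_summable)
    fix n
    have "(cmod (V (Suc n)))\<^sup>2 = (norm (kap (Suc n)))\<^sup>2 * (norm (u (Suc n)))\<^sup>2"
      unfolding V_def by (simp add: norm_mult power_mult_distrib)
    also have "\<dots> \<le> (norm (kap (Suc n)))\<^sup>2 * B\<^sup>2" using B[of "Suc n"] by (intro mult_left_mono power_mono) auto
    finally show "norm ((cmod (V (Suc n)))\<^sup>2) \<le> B\<^sup>2 * (norm (kap (Suc n)))\<^sup>2" by (simp add: mult.commute)
  qed
qed

lemma V_nonzero: "\<exists>n\<ge>1. V n \<noteq> 0"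
proof -
  have "eventually (\<lambda>n. dist (u n) 1 < 1) sequentially" using u_lim by (simp add: tendsto_iff)
  moreover have "eventually (\<lambda>n. n \<ge> 1) sequentially" by (rule eventually_ge_at_top)
  ultimately have "eventually (\<lambda>n. n \<ge> 1 \<and> dist (u n) 1 < 1) sequentially" by (rule eventually_conj[rotated])
  then obtain n where n: "n \<ge> 1" "dist (u n) 1 < 1" by (auto simp: eventually_sequentially)
  then have "u n \<noteq> 0" by auto
  then show ?thesis using n kap_nz[of n] unfolding V_def by auto
qed

lemma l2_lim: "in_l2 x \<Longrightarrow> (\<lambda>n. x (Suc n)) \<longlonglongrightarrow> 0"
proof -
  assume "in_l2 x"
  then have "(\<lambda>n. (cmod (x (Suc n)))\<^sup>2) \<longlonglongrightarrow> 0" unfolding in_l2_def by (rule summable_LIMSEQ_zero)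
  then have "(\<lambda>n. sqrt ((cmod (x (Suc n)))\<^sup>2)) \<longlonglongrightarrow> sqrt 0" by (rule tendsto_real_sqrt)
  then have "(\<lambda>n. cmod (x (Suc n))) \<longlonglongrightarrow> 0" by simp
  then show ?thesis by (simp add: tendsto_norm_zero_iff)
qed

lemma V_rec_all: "n \<ge> 2 \<Longrightarrow> jac_apply q \<sigma> \<gamma> V n = z * V n"
proof -
  assume n: "n \<ge> 2"
  then obtain m where m: "n = Suc m" by (cases n) auto
  then have "m \<ge> 1" using n by simp
  then show ?thesis using rec_V[of m] m by simp
qed

lemma converse:
  assumes ev: "is_eigenvector q \<sigma> \<gamma> z x"
  shows "jac_apply q \<sigma> \<gamma> V 1 = z * V 1"
proof -
  have xl2: "in_l2 x" and xnz: "\<exists>n\<ge>1. x n \<noteq> 0" and xeq: "\<And>n. n \<ge> 1 \<Longrightarrow> jac_apply q \<sigma> \<gamma> x n = z * x n"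
    using ev unfolding is_eigenvector_def by auto
  define W where "W m = complex_of_real (w m) * (x m * V (Suc m) - x (Suc m) * V m)" for m
  have rx: "complex_of_real (w (Suc m)) * x (Suc (Suc m)) = z * x (Suc m) - complex_of_real (w m) * x m - QQ ^ m * x (Suc m)"
    if "m \<ge> 1" for m
    using xeq[of "Suc m"] that unfolding jac_apply_def jac_diag_def QQ_def by (simp add: algebra_simps)
  have rv: "complex_of_real (w (Suc m)) * V (Suc (Suc m)) = z * V (Suc m) - complex_of_real (w m) * V m - QQ ^ m * V (Suc m)"
    if "m \<ge> 1" for m
    using rec_V[of m] that unfolding jac_apply_def jac_diag_def QQ_def by (simp add: algebra_simps)
  have Wstep: "W (Suc m) = W m" if "m \<ge> 1" for m
  proof -
    have "W (Suc m) = x (Suc m) * (complex_of_real (w (Suc m)) * V (Suc (Suc m))) - V (Suc m) * (complex_of_real (w (Suc m)) * x (Suc (Suc m)))"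
      unfolding W_def by (simp add: algebra_simps)
    also have "\<dots> = W m" unfolding rx[OF that] rv[OF that] W_def by (simp add: algebra_simps)
    finally show ?thesis .
  qed
  have Wconst: "W (Suc k) = W 1" for k
    by (induction k) (use Wstep in auto)
  have "(\<lambda>k. W (Suc k)) \<longlonglongrightarrow> 0"
  proof -
    have x1: "(\<lambda>k. x (Suc k)) \<longlonglongrightarrow> 0" by (rule l2_lim[OF xl2])
    have v1: "(\<lambda>k. V (Suc k)) \<longlonglongrightarrow> 0" by (rule l2_lim[OF V_l2])
    have x2: "(\<lambda>k. x (Suc (Suc k))) \<longlonglongrightarrow> 0" using LIMSEQ_Suc[OF x1] by simp
    have v2: "(\<lambda>k. V (Suc (Suc k))) \<longlonglongrightarrow> 0" using LIMSEQ_Suc[OF v1] by simp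
    have "(\<lambda>k. complex_of_real (w (Suc k)) * (x (Suc k) * V (Suc (Suc k)) - x (Suc (Suc k)) * V (Suc k))) \<longlonglongrightarrow> 0 * (0 * 0 - 0 * 0)"
      by (intro tendsto_intros w_lim x1 x2 v1 v2)
    then show ?thesis unfolding W_def by simp
  qed
  then have W1: "W 1 = 0" unfolding Wconst by (simp add: LIMSEQ_const_iff)
  have x1nz: "x 1 \<noteq> 0"
  proof
    assume x10: "x 1 = 0"
    have e1: "x 1 + complex_of_real (w 1) * x 2 = z * x 1"
      using xeq[of 1] unfolding jac_apply_def jac_diag_def by simp
    have x20: "x 2 = 0" using e1 x10 w_nz[of 1] by simp
    have all: "x (Suc k) = 0 \<and> x (Suc (Suc k)) = 0" for k
    proof (induction k)
      case 0 then show ?case using x10 x20 by (simp add: numeral_2_eq_2)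
    next
      case (Suc k)
      have "jac_apply q \<sigma> \<gamma> x (Suc (Suc k)) = z * x (Suc (Suc k))" by (rule xeq) simp
      then have "complex_of_real (w (Suc (Suc k))) * x (Suc (Suc (Suc k))) = 0"
        using Suc.IH unfolding jac_apply_def by simp
      then show ?case using Suc.IH w_nz[of "Suc (Suc k)"] by simp
    qed
    have "\<forall>n\<ge>1. x n = 0"
    proof (intro allI impI)
      fix n :: nat assume "n \<ge> 1"
      then obtain k where "n = Suc k" by (cases n) auto
      then show "x n = 0" using all[of k] by simp
    qed
    then show False using xnz by blast
  qed
  have e1x: "x 1 + complex_of_real (w 1) * x 2 = z * x 1"
    using xeq[of 1] unfolding jac_apply_def jac_diag_def by simp
  have cross: "x 1 * V 2 = x 2 * V 1"
    using W1 w_nz[of 1] unfolding W_def by (simp add: numeral_2_eq_2)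
  have "x 1 * (jac_apply q \<sigma> \<gamma> V 1 - z * V 1) = x 1 * (V 1 + complex_of_real (w 1) * V 2 - z * V 1)"
    unfolding jac_apply_def jac_diag_def by simp
  also have "\<dots> = V 1 * (x 1 + complex_of_real (w 1) * x 2 - z * x 1)"
    using cross by (simp add: algebra_simps)
  also have "\<dots> = 0" using e1x by simp
  finally show ?thesis using x1nz by simp
qed

end

theorem mainTheorem14:
  fixes q \<sigma> \<gamma> :: real and z :: complex
  assumes "0 < q" "q < 1" "\<sigma> \<noteq> 0" "\<gamma> > -1" "z \<noteq> 0"
  shows "(is_eigenvalue q \<sigma> \<gamma> z \<longleftrightarrow>
           qpoch_phi11 (complex_of_real (q powr (- \<gamma>) * (cosh (\<sigma>/2))\<^sup>2) / z)
                       (complex_of_real ((cosh (\<sigma>/2))\<^sup>2) / z) q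
                       (- complex_of_real ((sinh (\<sigma>/2))\<^sup>2) / z) = 0)
       \<and> (qpoch_phi11 (complex_of_real (q powr (- \<gamma>) * (cosh (\<sigma>/2))\<^sup>2) / z)
                       (complex_of_real ((cosh (\<sigma>/2))\<^sup>2) / z) q
                       (- complex_of_real ((sinh (\<sigma>/2))\<^sup>2) / z) = 0
          \<longrightarrow> is_eigenvector q \<sigma> \<gamma> z (eigvec q \<sigma> \<gamma> z))"
proof -
  interpret jset q \<sigma> \<gamma> z using assms by unfold_locales
  have suff: "u 0 = 0 \<Longrightarrow> is_eigenvector q \<sigma> \<gamma> z V"
  proof -
    assume u0: "u 0 = 0"
    have "\<forall>n\<ge>1. jac_apply q \<sigma> \<gamma> V n = z * V n"
    proof (intro allI impI)
      fix n :: nat assume n: "n \<ge> 1"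
      show "jac_apply q \<sigma> \<gamma> V n = z * V n"
      proof (cases "n = 1")
        case True then show ?thesis using eq1_iff u0 by simp
      next
        case False then show ?thesis using n V_rec_all by simp
      qed
    qed
    then show ?thesis unfolding is_eigenvector_def using V_l2 V_nonzero by blast
  qed
  have nec: "is_eigenvalue q \<sigma> \<gamma> z \<Longrightarrow> u 0 = 0"
  proof -
    assume "is_eigenvalue q \<sigma> \<gamma> z"
    then obtain x where "is_eigenvector q \<sigma> \<gamma> z x" unfolding is_eigenvalue_def by blast
    then have "jac_apply q \<sigma> \<gamma> V 1 = z * V 1" by (rule converse)
    then show "u 0 = 0" using eq1_iff by simp
  qed
  show ?thesis unfolding F_eq eigvec_eq
    using suff nec unfolding is_eigenvalue_def by blast
qed

end
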